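(* Let $G$ be a directed $st$-graph and $G'$ a subgraph of $G$ with the same source and sink such that $\mathrm{Path}_A(G')=\mathrm{Path}_A(G)$. Then $G$ is vulnerable if and only if $G'$ is vulnerable.
   Context: A directed $st$-graph $G=(V,E,s,t)$ is a finite directed graph with no self-loops and no parallel edges, with distinct source $s$ (no incoming edges) and sink $t$ (no outgoing edges), such that every vertex lies on some directed walk from $s$ to $t$. $\mathrm{Path}_A(G)$ is the set of acyclic directed $s$–$t$ paths in $G$; $P(G)$ is the set of all directed $s$–$t$ walks. A flow is a finitely supported $\varphi:P(G)\to\mathbb{R}_{\ge0}$, inducing $\varphi(e)=\sum_p(\text{occurrences of }e\text{ in }p)\varphi(p)$. A latency function assigns each edge a continuous non-decreasing $l_e:\mathbb{R}_{\ge0}\to\mathbb{R}_{\ge0}$, and $l_p(\varphi)=\sum_{e\in p}l_e(\varphi(e))$. A flow is feasible for $(G,r,l)$ if its total value is $r$, and a Wardrop flow if for all $p,q$ with $\varphi(p)>0$, $l_p(\varphi)\le l_q(\varphi)$; $L(G,r,l)$ is the common latency of used paths at any Wardrop flow ($0$ if $r=0$). $G$ is vulnerable if there exist $r\ge0$, a latency function $l$ and a subgraph $H$ of $G$ (same source and sink) with $L(G,r,l)>L(H,r,l|_H)$. *)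

theory Defs
  imports "HOL-Analysis.Analysis"
begin

text \<open>Directed st-graphs. Edges are pairs of vertices, so there are no parallel edges.\<close>
record 'v stgraph =
  verts :: "'v set"
  arcs  :: "('v \<times> 'v) set"
  src   :: 'v
  snk   :: 'v

text \<open>A walk is represented by its vertex sequence; its edge sequence (with multiplicity):\<close>
definition walk_edges :: "'v list \<Rightarrow> ('v \<times> 'v) list" where
  "walk_edges p = zip p (tl p)"

definition st_walks :: "('v, 'b) stgraph_scheme \<Rightarrow> 'v list set" where
  "st_walks G = {p. p \<noteq> [] \<and> hd p = src G \<and> last p = snk G \<and>
                    set p \<subseteq> verts G \<and> set (walk_edges p) \<subseteq> arcs G}"

definition acyclic_paths :: "('v, 'b) stgraph_scheme \<Rightarrow> 'v list set" where
  "acyclic_paths G = {p \<in> st_walks G. distinct p}"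

definition st_graph :: "('v, 'b) stgraph_scheme \<Rightarrow> bool" where
  "st_graph G \<longleftrightarrow>
     finite (verts G) \<and> arcs G \<subseteq> verts G \<times> verts G \<and>
     (\<forall>v. (v, v) \<notin> arcs G) \<and>
     src G \<in> verts G \<and> snk G \<in> verts G \<and> src G \<noteq> snk G \<and>
     (\<forall>v. (v, src G) \<notin> arcs G) \<and> (\<forall>v. (snk G, v) \<notin> arcs G) \<and>
     (\<forall>v \<in> verts G. \<exists>p \<in> st_walks G. v \<in> set p)"

definition subgraph :: "('v, 'b) stgraph_scheme \<Rightarrow> ('v, 'b) stgraph_scheme \<Rightarrow> bool" where
  "subgraph H G \<longleftrightarrow> verts H \<subseteq> verts G \<and> arcs H \<subseteq> arcs G \<and>
                      src H = src G \<and> snk H = snk G"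

definition is_flow :: "('v, 'b) stgraph_scheme \<Rightarrow> ('v list \<Rightarrow> real) \<Rightarrow> bool" where
  "is_flow G \<phi> \<longleftrightarrow> (\<forall>p. \<phi> p \<ge> 0) \<and> finite {p. \<phi> p \<noteq> 0} \<and> {p. \<phi> p \<noteq> 0} \<subseteq> st_walks G"

definition edge_flow :: "('v list \<Rightarrow> real) \<Rightarrow> ('v \<times> 'v) \<Rightarrow> real" where
  "edge_flow \<phi> e = (\<Sum>p\<in>{p. \<phi> p \<noteq> 0}. real (count_list (walk_edges p) e) * \<phi> p)"

definition latency_fn :: "('v, 'b) stgraph_scheme \<Rightarrow> ('v \<times> 'v \<Rightarrow> real \<Rightarrow> real) \<Rightarrow> bool" where
  "latency_fn G l \<longleftrightarrow> (\<forall>e \<in> arcs G. continuous_on {0..} (l e) \<and> mono_on {0..} (l e) \<and>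
                                      (\<forall>x\<ge>0. l e x \<ge> 0))"

definition path_latency :: "('v \<times> 'v \<Rightarrow> real \<Rightarrow> real) \<Rightarrow> ('v list \<Rightarrow> real) \<Rightarrow> 'v list \<Rightarrow> real" where
  "path_latency l \<phi> p = sum_list (map (\<lambda>e. l e (edge_flow \<phi> e)) (walk_edges p))"

definition feasible :: "('v, 'b) stgraph_scheme \<Rightarrow> real \<Rightarrow> ('v list \<Rightarrow> real) \<Rightarrow> bool" where
  "feasible G r \<phi> \<longleftrightarrow> is_flow G \<phi> \<and> (\<Sum>p\<in>{p. \<phi> p \<noteq> 0}. \<phi> p) = r"

definition wardrop :: "('v, 'b) stgraph_scheme \<Rightarrow> real \<Rightarrow> ('v \<times> 'v \<Rightarrow> real \<Rightarrow> real) \<Rightarrow> ('v list \<Rightarrow> real) \<Rightarrow> bool" where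
  "wardrop G r l \<phi> \<longleftrightarrow> feasible G r \<phi> \<and>
     (\<forall>p \<in> st_walks G. \<forall>q \<in> st_walks G. \<phi> p > 0 \<longrightarrow> path_latency l \<phi> p \<le> path_latency l \<phi> q)"

definition eq_latency :: "('v, 'b) stgraph_scheme \<Rightarrow> real \<Rightarrow> ('v \<times> 'v \<Rightarrow> real \<Rightarrow> real) \<Rightarrow> real" where
  "eq_latency G r l = (if r = 0 then 0 else
     (SOME c. \<exists>\<phi>. wardrop G r l \<phi> \<and> (\<forall>p. \<phi> p > 0 \<longrightarrow> path_latency l \<phi> p = c)))"

definition vulnerable :: "('v, 'b) stgraph_scheme \<Rightarrow> bool" where
  "vulnerable G \<longleftrightarrow> (\<exists>r\<ge>0. \<exists>l. latency_fn G l \<and>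
      (\<exists>H. st_graph H \<and> subgraph H G \<and> eq_latency G r l > eq_latency H r l))"

end

theory Submission
  imports Defs
begin

lemma walk_edges_Nil[simp]: "walk_edges [] = []" and walk_edges_single[simp]: "walk_edges [a] = []"
  and walk_edges_Cons2[simp]: "walk_edges (a # b # r) = (a, b) # walk_edges (b # r)"
  by (simp_all add: walk_edges_def)

lemma walk_edges_split: "walk_edges (as @ v # bs) = walk_edges (as @ [v]) @ walk_edges (v # bs)"
proof (induction as)
  case Nil then show ?case by simp
next
  case (Cons a as) then show ?case by (cases as) auto
qed

lemma walk_edges_decomp:
  "walk_edges (xs @ v # ys @ v # zs) = walk_edges (xs @ [v]) @ walk_edges (v # ys @ [v]) @ walk_edges (v # zs)"
  using walk_edges_split[of xs v "ys @ v # zs"] walk_edges_split[of "v # ys" v zs] by simp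

lemma walk_edges_pts0: "(a, b) \<in> set (walk_edges p) \<Longrightarrow> a \<in> set p \<and> b \<in> set p"
proof -
  assume "(a, b) \<in> set (walk_edges p)"
  then have "a \<in> set p" "b \<in> set (tl p)" unfolding walk_edges_def by (auto elim: in_set_zipE)
  moreover have "set (tl p) \<subseteq> set p" by (cases p) auto
  ultimately show ?thesis by auto
qed

lemma walk_edges_pts: "set (walk_edges p) \<subseteq> set p \<times> set p"
  using walk_edges_pts0 by fast

lemma shortcut_walk:
  assumes "p \<in> st_walks A" "p = xs @ v # ys @ v # zs"
  shows "xs @ v # zs \<in> st_walks A" "length (xs @ v # zs) < length p"
proof -
  have e: "set (walk_edges (xs @ v # zs)) \<subseteq> set (walk_edges p)"
    using walk_edges_decomp[of xs v ys zs] walk_edges_split[of xs v zs] assms(2) by auto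
  have "hd (xs @ v # zs) = hd p" using assms(2) by (cases xs) auto
  moreover have "last (xs @ v # zs) = last p" using assms(2) by (cases zs) auto
  ultimately show "xs @ v # zs \<in> st_walks A" using assms e unfolding st_walks_def by auto
  show "length (xs @ v # zs) < length p" using assms(2) by simp
qed

lemma path_latency_append: "path_latency l \<phi> p = sum_list (map (\<lambda>e. l e (edge_flow \<phi> e)) (walk_edges p))"
  by (simp add: path_latency_def)

lemma shortcut:
  assumes "p \<in> st_walks A" "\<forall>e\<in>arcs A. l e (edge_flow \<phi> e) \<ge> 0"
  shows "\<exists>q\<in>acyclic_paths A. path_latency l \<phi> q \<le> path_latency l \<phi> p"
  using assms(1)
proof (induction "length p" arbitrary: p rule: less_induct)
  case less
  show ?case
  proof (cases "distinct p")
    case True then show ?thesis using less.prems unfolding acyclic_paths_def by auto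
  next
    case False
    then obtain xs v ys zs where d: "p = xs @ v # ys @ v # zs"
      using not_distinct_decomp[OF False] by auto
    note s = shortcut_walk[OF less.prems d]
    obtain q where q: "q \<in> acyclic_paths A" "path_latency l \<phi> q \<le> path_latency l \<phi> (xs @ v # zs)"
      using less.hyps[OF s(2) s(1)] by blast
    have arcs: "set (walk_edges p) \<subseteq> arcs A" using less.prems unfolding st_walks_def by auto
    have "path_latency l \<phi> p = path_latency l \<phi> (xs @ v # zs) +
        sum_list (map (\<lambda>e. l e (edge_flow \<phi> e)) (walk_edges (v # ys @ [v])))"
      unfolding path_latency_def d walk_edges_decomp walk_edges_split[of xs v zs] by simp
    moreover have "sum_list (map (\<lambda>e. l e (edge_flow \<phi> e)) (walk_edges (v # ys @ [v]))) \<ge> 0"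
      apply (rule sum_list_nonneg)
      using arcs assms(2) unfolding d walk_edges_decomp by auto
    ultimately show ?thesis using q by (intro bexI[OF _ q(1)]) linarith
  qed
qed

lemma edge_flow_nonneg: "(\<forall>p. \<phi> p \<ge> 0) \<Longrightarrow> edge_flow \<phi> e \<ge> 0"
  unfolding edge_flow_def by (intro sum_nonneg) auto

lemma sum_superset:
  assumes "finite S" "{p. \<phi> p \<noteq> 0} \<subseteq> S"
  shows "(\<Sum>p\<in>{p. \<phi> p \<noteq> 0}. f p * \<phi> p) = (\<Sum>p\<in>S. f p * (\<phi> p :: real))"
  by (rule sum.mono_neutral_left) (use assms in auto)

lemma flow_step:
  assumes lat: "latency_fn A l" and W: "wardrop A r l \<phi>"
    and U: "\<forall>p. \<phi> p > 0 \<longrightarrow> path_latency l \<phi> p = c"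
    and pos: "\<phi> p > 0" and dec: "p = xs @ v # ys @ v # zs"
  defines "p' \<equiv> xs @ v # zs"
  defines "\<phi>2 \<equiv> \<phi>(p := 0, p' := \<phi> p' + \<phi> p)"
  shows "wardrop A r l \<phi>2 \<and> (\<forall>q. \<phi>2 q > 0 \<longrightarrow> path_latency l \<phi>2 q = c) \<and>
         (\<Sum>q\<in>{q. \<phi>2 q \<noteq> 0}. length q) < (\<Sum>q\<in>{q. \<phi> q \<noteq> 0}. length q)"
proof -
  have nn: "\<forall>q. \<phi> q \<ge> 0" and fin: "finite {q. \<phi> q \<noteq> 0}" and supp: "{q. \<phi> q \<noteq> 0} \<subseteq> st_walks A"
    and tot: "(\<Sum>q\<in>{q. \<phi> q \<noteq> 0}. \<phi> q) = r"
    and war: "\<forall>p \<in> st_walks A. \<forall>q \<in> st_walks A. \<phi> p > 0 \<longrightarrow> path_latency l \<phi> p \<le> path_latency l \<phi> q"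
    using W unfolding wardrop_def feasible_def is_flow_def by auto
  have pA: "p \<in> st_walks A" using supp pos by auto
  note sw = shortcut_walk[OF pA dec]
  have p'A: "p' \<in> st_walks A" and len: "length p' < length p" using sw unfolding p'_def by auto
  have pp': "p \<noteq> p'" using len by auto
  define C where "C = walk_edges (v # ys @ [v])"
  define E1 where "E1 = walk_edges (xs @ [v])"
  define E2 where "E2 = walk_edges (v # zs)"
  have ep: "walk_edges p = E1 @ C @ E2" unfolding dec C_def E1_def E2_def by (rule walk_edges_decomp)
  have ep': "walk_edges p' = E1 @ E2" unfolding p'_def E1_def E2_def by (rule walk_edges_split)
  have arcsp: "set (walk_edges p) \<subseteq> arcs A" using pA unfolding st_walks_def by auto
  have lnn: "\<And>e x. e \<in> arcs A \<Longrightarrow> x \<ge> 0 \<Longrightarrow> l e x \<ge> 0" using lat unfolding latency_fn_def by auto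
  have Cnn: "\<forall>e\<in>set C. l e (edge_flow \<phi> e) \<ge> 0"
    using arcsp ep lnn edge_flow_nonneg[OF nn] by auto
  have "path_latency l \<phi> p = path_latency l \<phi> p' + sum_list (map (\<lambda>e. l e (edge_flow \<phi> e)) C)"
    unfolding path_latency_def ep ep' by simp
  moreover have "path_latency l \<phi> p \<le> path_latency l \<phi> p'" using war pA p'A pos by auto
  moreover have "sum_list (map (\<lambda>e. l e (edge_flow \<phi> e)) C) \<ge> 0" using Cnn by (intro sum_list_nonneg) auto
  ultimately have C0s: "sum_list (map (\<lambda>e. l e (edge_flow \<phi> e)) C) = 0" and latp': "path_latency l \<phi> p' = path_latency l \<phi> p"
    by linarith+
  have C0: "\<forall>e\<in>set C. l e (edge_flow \<phi> e) = 0"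
    using C0s Cnn by (subst (asm) sum_list_nonneg_eq_0_iff) auto
  define S where "S = insert p' {q. \<phi> q \<noteq> 0}"
  have finS: "finite S" using fin unfolding S_def by auto
  have pS: "p \<in> S" and p'S: "p' \<in> S" using pos unfolding S_def by auto
  have nn2: "\<forall>q. \<phi>2 q \<ge> 0" using nn unfolding \<phi>2_def by auto
  have supp2S: "{q. \<phi>2 q \<noteq> 0} \<subseteq> S" unfolding S_def \<phi>2_def by auto
  have supp1S: "{q. \<phi> q \<noteq> 0} \<subseteq> S" unfolding S_def by auto
  have phi2: "\<phi>2 q = \<phi> q - (if q = p then \<phi> p else 0) + (if q = p' then \<phi> p else 0)" for q
    unfolding \<phi>2_def using pp' by auto
  have sumS: "(\<Sum>q\<in>S. f q * \<phi>2 q) = (\<Sum>q\<in>S. f q * \<phi> q) - f p * \<phi> p + f p' * \<phi> p" for f :: "'a list \<Rightarrow> real"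
  proof -
    have "(\<Sum>q\<in>S. f q * \<phi>2 q) = (\<Sum>q\<in>S. f q * \<phi> q - (if q = p then f p * \<phi> p else 0) + (if q = p' then f p' * \<phi> p else 0))"
      by (rule sum.cong) (auto simp: phi2 algebra_simps)
    also have "\<dots> = (\<Sum>q\<in>S. f q * \<phi> q) - f p * \<phi> p + f p' * \<phi> p"
      using finS pS p'S by (simp add: sum.distrib sum_subtractf)
    finally show ?thesis .
  qed
  have ef2: "edge_flow \<phi>2 e = edge_flow \<phi> e - real (count_list C e) * \<phi> p" for e
  proof -
    have "edge_flow \<phi>2 e = (\<Sum>q\<in>S. real (count_list (walk_edges q) e) * \<phi>2 q)"
      unfolding edge_flow_def by (rule sum_superset[OF finS supp2S])
    also have "\<dots> = edge_flow \<phi> e - real (count_list (walk_edges p) e) * \<phi> p + real (count_list (walk_edges p') e) * \<phi> p"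
      unfolding sumS edge_flow_def sum_superset[OF finS supp1S] ..
    also have "\<dots> = edge_flow \<phi> e - real (count_list C e) * \<phi> p"
      unfolding ep ep' by (simp add: algebra_simps)
    finally show ?thesis .
  qed
  have leq: "l e (edge_flow \<phi>2 e) = l e (edge_flow \<phi> e)" for e
  proof (cases "count_list C e = 0")
    case True then show ?thesis using ef2 by simp
  next
    case False
    then have eC: "e \<in> set C" by (metis count_notin)
    then have eA: "e \<in> arcs A" using arcsp ep by auto
    have z: "l e (edge_flow \<phi> e) = 0" using C0 eC by auto
    have a: "edge_flow \<phi>2 e \<ge> 0" by (rule edge_flow_nonneg[OF nn2])
    have b: "edge_flow \<phi>2 e \<le> edge_flow \<phi> e" using ef2 pos by simp
    have "mono_on {0..} (l e)" using lat eA unfolding latency_fn_def by auto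
    then have "l e (edge_flow \<phi>2 e) \<le> l e (edge_flow \<phi> e)"
      using a b by (auto elim: mono_onD)
    moreover have "l e (edge_flow \<phi>2 e) \<ge> 0" using lnn eA a by auto
    ultimately show ?thesis using z by linarith
  qed
  have pl: "path_latency l \<phi>2 q = path_latency l \<phi> q" for q
    unfolding path_latency_def using leq by simp
  have used2: "\<phi>2 q > 0 \<Longrightarrow> path_latency l \<phi> q = c" for q
  proof -
    assume "\<phi>2 q > 0"
    then have "q = p' \<or> \<phi> q > 0" unfolding \<phi>2_def using pp' by (auto split: if_splits)
    then show ?thesis using U pos latp' by auto
  qed
  have cle: "\<forall>q\<in>st_walks A. c \<le> path_latency l \<phi> q" using war pA pos U by auto
  have supp2: "{q. \<phi>2 q \<noteq> 0} \<subseteq> st_walks A" using supp2S supp p'A unfolding S_def by auto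
  have tot2: "(\<Sum>q\<in>{q. \<phi>2 q \<noteq> 0}. \<phi>2 q) = r"
  proof -
    have "(\<Sum>q\<in>{q. \<phi>2 q \<noteq> 0}. \<phi>2 q) = (\<Sum>q\<in>S. 1 * \<phi>2 q)"
      using sum_superset[OF finS supp2S, of "\<lambda>_. 1"] by simp
    also have "\<dots> = (\<Sum>q\<in>S. 1 * \<phi> q)" unfolding sumS by simp
    also have "\<dots> = r" using sum_superset[OF finS supp1S, of "\<lambda>_. 1"] tot by simp
    finally show ?thesis .
  qed
  have fin2: "finite {q. \<phi>2 q \<noteq> 0}" using finS supp2S finite_subset by auto
  have W2: "wardrop A r l \<phi>2"
    unfolding wardrop_def feasible_def is_flow_def
    using nn2 fin2 supp2 tot2 used2 cle pl supp2 by (auto simp: order_less_le)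
  have m1: "(\<Sum>q\<in>{q. \<phi>2 q \<noteq> 0}. length q) \<le> (\<Sum>q\<in>insert p' ({q. \<phi> q \<noteq> 0} - {p}). length q)"
    by (rule sum_mono2) (use fin in \<open>auto simp: \<phi>2_def split: if_splits\<close>)
  also have "\<dots> \<le> length p' + (\<Sum>q\<in>{q. \<phi> q \<noteq> 0} - {p}. length q)"
    using fin by (simp add: sum.insert_if)
  also have "\<dots> < length p + (\<Sum>q\<in>{q. \<phi> q \<noteq> 0} - {p}. length q)" using len by simp
  also have "\<dots> = (\<Sum>q\<in>{q. \<phi> q \<noteq> 0}. length q)"
    using sum.remove[OF fin, of p length] pos by simp
  finally show ?thesis using W2 used2 pl by auto
qed

lemma to_acyclic:
  assumes lat: "latency_fn A l" and W: "wardrop A r l \<phi>"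
    and U: "\<forall>p. \<phi> p > 0 \<longrightarrow> path_latency l \<phi> p = c"
  shows "\<exists>\<psi>. wardrop A r l \<psi> \<and> (\<forall>p. \<psi> p > 0 \<longrightarrow> path_latency l \<psi> p = c) \<and> (\<forall>p. \<psi> p > 0 \<longrightarrow> distinct p)"
  using W U
proof (induction "\<Sum>q\<in>{q. \<phi> q \<noteq> 0}. length q" arbitrary: \<phi> rule: less_induct)
  case less
  show ?case
  proof (cases "\<forall>p. \<phi> p > 0 \<longrightarrow> distinct p")
    case True then show ?thesis using less.prems by blast
  next
    case False
    then obtain p where pos: "\<phi> p > 0" and nd: "\<not> distinct p" by blast
    then obtain xs v ys zs where d: "p = xs @ v # ys @ v # zs"
      using not_distinct_decomp[OF nd] by auto
    note st = flow_step[OF lat less.prems(1) less.prems(2) pos d]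
    show ?thesis using less.hyps[OF conjunct2[OF conjunct2[OF st]] conjunct1[OF st] conjunct1[OF conjunct2[OF st]]] .
  qed
qed

lemma key:
  assumes sub: "st_walks B \<subseteq> st_walks A" and acyc: "acyclic_paths A = acyclic_paths B"
    and lat: "latency_fn A l"
  shows "(\<exists>\<phi>. wardrop A r l \<phi> \<and> (\<forall>p. \<phi> p > 0 \<longrightarrow> path_latency l \<phi> p = c)) \<longleftrightarrow>
         (\<exists>\<phi>. wardrop B r l \<phi> \<and> (\<forall>p. \<phi> p > 0 \<longrightarrow> path_latency l \<phi> p = c))"
proof
  assume "\<exists>\<phi>. wardrop A r l \<phi> \<and> (\<forall>p. \<phi> p > 0 \<longrightarrow> path_latency l \<phi> p = c)"
  then obtain \<phi> where "wardrop A r l \<phi>" "\<forall>p. \<phi> p > 0 \<longrightarrow> path_latency l \<phi> p = c" by blast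
  from to_acyclic[OF lat this] obtain \<psi> where W: "wardrop A r l \<psi>"
    and U: "\<forall>p. \<psi> p > 0 \<longrightarrow> path_latency l \<psi> p = c" and D: "\<forall>p. \<psi> p > 0 \<longrightarrow> distinct p" by blast
  have nn: "\<forall>q. \<psi> q \<ge> 0" and supp: "{q. \<psi> q \<noteq> 0} \<subseteq> st_walks A"
    using W unfolding wardrop_def feasible_def is_flow_def by auto
  have "{q. \<psi> q \<noteq> 0} \<subseteq> acyclic_paths A"
  proof
    fix q assume q: "q \<in> {q. \<psi> q \<noteq> 0}"
    then have "\<psi> q > 0" using nn by (simp add: order_less_le)
    then show "q \<in> acyclic_paths A" using supp q D unfolding acyclic_paths_def by auto
  qed
  then have "{q. \<psi> q \<noteq> 0} \<subseteq> st_walks B" using acyc unfolding acyclic_paths_def by auto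
  then have "wardrop B r l \<psi>" using W sub unfolding wardrop_def feasible_def is_flow_def by blast
  then show "\<exists>\<phi>. wardrop B r l \<phi> \<and> (\<forall>p. \<phi> p > 0 \<longrightarrow> path_latency l \<phi> p = c)" using U by blast
next
  assume "\<exists>\<phi>. wardrop B r l \<phi> \<and> (\<forall>p. \<phi> p > 0 \<longrightarrow> path_latency l \<phi> p = c)"
  then obtain \<phi> where W: "wardrop B r l \<phi>" and U: "\<forall>p. \<phi> p > 0 \<longrightarrow> path_latency l \<phi> p = c" by blast
  have nn: "\<forall>q. \<phi> q \<ge> 0" and supp: "{q. \<phi> q \<noteq> 0} \<subseteq> st_walks B"
    and war: "\<forall>p \<in> st_walks B. \<forall>q \<in> st_walks B. \<phi> p > 0 \<longrightarrow> path_latency l \<phi> p \<le> path_latency l \<phi> q"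
    using W unfolding wardrop_def feasible_def is_flow_def by auto
  have lnn: "\<forall>e\<in>arcs A. l e (edge_flow \<phi> e) \<ge> 0"
    using lat edge_flow_nonneg[OF nn] unfolding latency_fn_def by auto
  have "path_latency l \<phi> p \<le> path_latency l \<phi> q" if hp: "p \<in> st_walks A" "q \<in> st_walks A" "\<phi> p > 0" for p q
  proof -
    obtain q' where q': "q' \<in> acyclic_paths A" "path_latency l \<phi> q' \<le> path_latency l \<phi> q"
      using shortcut[where p=q and A=A and l=l and \<phi>=\<phi>] hp(2) lnn by blast
    have "q' \<in> st_walks B" using q'(1) acyc unfolding acyclic_paths_def by auto
    moreover have "p \<in> st_walks B" using supp hp(3) by auto
    ultimately show ?thesis using war hp(3) q'(2) by force
  qed
  then have "wardrop A r l \<phi>" using W sub unfolding wardrop_def feasible_def is_flow_def by blast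
  then show "\<exists>\<phi>. wardrop A r l \<phi> \<and> (\<forall>p. \<phi> p > 0 \<longrightarrow> path_latency l \<phi> p = c)" using U by blast
qed

lemma eq_latency_key:
  assumes "st_walks B \<subseteq> st_walks A" "acyclic_paths A = acyclic_paths B" "latency_fn A l"
  shows "eq_latency A r l = eq_latency B r l"
  unfolding eq_latency_def using key[OF assms] by simp

lemma eq_latency_agree:
  assumes "\<forall>e\<in>arcs H. l e = l' e"
  shows "eq_latency H r l = eq_latency H r l'"
proof -
  have pl: "path_latency l \<phi> p = path_latency l' \<phi> p" if "p \<in> st_walks H" for \<phi> p
  proof -
    have "set (walk_edges p) \<subseteq> arcs H" using that unfolding st_walks_def by auto
    then show ?thesis unfolding path_latency_def using assms
      by (intro arg_cong[where f=sum_list] map_cong) auto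
  qed
  have "(wardrop H r l \<phi> \<and> (\<forall>p. \<phi> p > 0 \<longrightarrow> path_latency l \<phi> p = c)) \<longleftrightarrow>
        (wardrop H r l' \<phi> \<and> (\<forall>p. \<phi> p > 0 \<longrightarrow> path_latency l' \<phi> p = c))" for \<phi> c
  proof -
    have "wardrop H r l \<phi> \<longleftrightarrow> wardrop H r l' \<phi>" unfolding wardrop_def using pl by auto
    moreover have "wardrop H r l' \<phi> \<Longrightarrow> \<phi> p > 0 \<Longrightarrow> p \<in> st_walks H" for p
      unfolding wardrop_def feasible_def is_flow_def by auto
    ultimately show ?thesis using pl by metis
  qed
  then show ?thesis unfolding eq_latency_def by simp
qed

lemma subgraph_walks: "subgraph B A \<Longrightarrow> st_walks B \<subseteq> st_walks A"
  unfolding subgraph_def st_walks_def by auto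

lemma subgraph_acyc: "subgraph B A \<Longrightarrow> acyclic_paths B \<subseteq> acyclic_paths A"
  using subgraph_walks unfolding acyclic_paths_def by auto

lemma restrict_acyclic:
  fixes H :: "'v stgraph"
  assumes H: "st_graph H"
  defines "H' \<equiv> \<lparr>verts = (\<Union>p\<in>acyclic_paths H. set p), arcs = (\<Union>p\<in>acyclic_paths H. set (walk_edges p)),
                 src = src H, snk = snk H\<rparr>"
  shows "st_graph H'" "subgraph H' H" "acyclic_paths H = acyclic_paths H'"
proof -
  have sub: "subgraph H' H"
    unfolding subgraph_def H'_def acyclic_paths_def st_walks_def by auto
  have inc: "acyclic_paths H \<subseteq> st_walks H'"
    unfolding H'_def acyclic_paths_def st_walks_def by auto
  show eq: "acyclic_paths H = acyclic_paths H'"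
    using subgraph_acyc[OF sub] inc unfolding acyclic_paths_def by auto
  obtain p0 where "p0 \<in> st_walks H" using H unfolding st_graph_def by blast
  then obtain q where q: "q \<in> acyclic_paths H"
    using shortcut[where p=p0 and A=H and l="\<lambda>_ _. 0" and \<phi>="\<lambda>_. 0"] by auto
  have qw: "q \<noteq> []" "hd q = src H" "last q = snk H" using q unfolding acyclic_paths_def st_walks_def by auto
  have "src H \<in> verts H'" "snk H \<in> verts H'" proof -
    have "src H \<in> set q" "snk H \<in> set q" using qw hd_in_set[of q] last_in_set[of q] by auto
    then show "src H \<in> verts H'" "snk H \<in> verts H'" using q unfolding H'_def by auto
  qed
  moreover have "arcs H' \<subseteq> verts H' \<times> verts H'" unfolding H'_def using walk_edges_pts by fastforce
  moreover have "\<forall>v\<in>verts H'. \<exists>p\<in>st_walks H'. v \<in> set p" using inc unfolding H'_def by auto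
  moreover have "finite (verts H')" using H sub unfolding st_graph_def subgraph_def by (auto intro: finite_subset)
  ultimately show "st_graph H'" using H sub unfolding st_graph_def subgraph_def by (auto simp: H'_def)
  show "subgraph H' H" by (rule sub)
qed

theorem lemma5:
  fixes G G' :: "'v stgraph"
  assumes "st_graph G" and "st_graph G'" and "subgraph G' G"
    and "acyclic_paths G' = acyclic_paths G"
  shows "vulnerable G \<longleftrightarrow> vulnerable G'"
proof
  assume "vulnerable G"
  then obtain r l H where r: "r \<ge> 0" and lat: "latency_fn G l" and H: "st_graph H" "subgraph H G"
    and gt: "eq_latency G r l > eq_latency H r l" unfolding vulnerable_def by blast
  define H' where "H' = \<lparr>verts = (\<Union>p\<in>acyclic_paths H. set p), arcs = (\<Union>p\<in>acyclic_paths H. set (walk_edges p)),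
                 src = src H, snk = snk H\<rparr>"
  note R = restrict_acyclic[OF H(1), folded H'_def]
  have latH: "latency_fn H l" using lat H(2) unfolding latency_fn_def subgraph_def by auto
  have latG': "latency_fn G' l" using lat assms(3) unfolding latency_fn_def subgraph_def by auto
  have e1: "eq_latency G r l = eq_latency G' r l"
    by (rule eq_latency_key[OF subgraph_walks[OF assms(3)] assms(4)[symmetric] lat])
  have e2: "eq_latency H r l = eq_latency H' r l"
    by (rule eq_latency_key[OF subgraph_walks[OF R(2)] R(3) latH])
  have aH: "acyclic_paths H \<subseteq> st_walks G'"
    using subgraph_acyc[OF H(2)] assms(4) unfolding acyclic_paths_def by auto
  have "subgraph H' G'"
    using aH H(2) assms(3) unfolding subgraph_def H'_def st_walks_def by auto
  then show "vulnerable G'" unfolding vulnerable_def using r latG' R(1) gt e1 e2 by auto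
next
  assume "vulnerable G'"
  then obtain r l' H where r: "r \<ge> 0" and lat': "latency_fn G' l'" and H: "st_graph H" "subgraph H G'"
    and gt: "eq_latency G' r l' > eq_latency H r l'" unfolding vulnerable_def by blast
  define l where "l = (\<lambda>e. if e \<in> arcs G' then l' e else (\<lambda>_. 0::real))"
  have lat: "latency_fn G l" using lat' unfolding latency_fn_def l_def by (auto simp: mono_on_def)
  have e1: "eq_latency G r l = eq_latency G' r l"
    by (rule eq_latency_key[OF subgraph_walks[OF assms(3)] assms(4)[symmetric] lat])
  have e2: "eq_latency G' r l = eq_latency G' r l'"
    by (rule eq_latency_agree) (auto simp: l_def)
  have e3: "eq_latency H r l = eq_latency H r l'"
    by (rule eq_latency_agree) (use H(2) in \<open>auto simp: l_def subgraph_def\<close>)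
  have "subgraph H G" using H(2) assms(3) unfolding subgraph_def by auto
  moreover have "eq_latency H r l < eq_latency G r l" using gt e1 e2 e3 by linarith
  ultimately show "vulnerable G" unfolding vulnerable_def using r lat H(1) by blast
qed

end
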